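(* Consider the discrete-time per-UE credit recursion described in the context, under either debit rule (CBS-DT or CBS-PU). Then: (i) (Bounded credit) for every UE $u$ and every slot $n\ge 0$, $C_u[n]\in[lo_u,hi_u]$; (ii) (Deterministic deficit recovery) if $C_u[k]<0$ for some slot $k$ and no new transmission grant is issued to $u$ in slots $k,k+1,\dots$, then $C_u$ reaches a non-negative value after finitely many slots. Specifically, the recovery time from the worst-case deficit $lo_u$, assuming no grants are issued, is the deterministic value $T^{\mathrm{rec}}_{\max}=\left\lceil -lo_u/\Delta C_u\right\rceil\cdot T_{\mathrm{slot}}$, and this value is tight.
   Context: Time is slotted: slots $n\in\mathbb{Z}_{\ge0}$ have duration $T_{\mathrm{slot}}>0$. A base station serves a finite set of UEs $\{1,\dots,U\}$. For each UE $u$: $Q_u[n]\in\mathbb{Z}_{\ge0}$ is its downlink backlog (bytes) at the start of slot $n$; $G_u[n]\in\{0,1\}$ indicates whether $u$ receives a new (non-retransmission) grant in slot $n$, with transport block size $\mathrm{TBS}_u[n]\ge 0$ bytes. Each UE has a per-slot credit allowance $\Delta C_u=\texttt{idleSlope}_{p(u)}\cdot T_{\mathrm{slot}}>0$ (bytes) and credit bounds $lo_u<0<hi_u$. Define $f(C,\Delta C,Q)=\min(C+\Delta C,0)$ if $C<0$; $f(C,\Delta C,Q)=0$ if $C>0$ and $Q=0$; $f(C,\Delta C,Q)=C+\Delta C$ otherwise. The credit evolves as $C_u[n+1]=\min\{\max\{f(C_u[n],\Delta C_u,Q_u[n])-D_u[n],\,lo_u\},\,hi_u\}$, starting from some $C_u[0]\in[lo_u,hi_u]$,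 where the debit is $D_u[n]=0$ if $G_u[n]=0$, and otherwise $D_u[n]=\mathrm{TBS}_u[n]$ (variant CBS-DT) or $D_u[n]=\min\{\mathrm{TBS}_u[n],Q_u[n]\}$ (variant CBS-PU). A UE is eligible for a new grant in slot $n$ only if (besides MAC conditions: $Q_u[n]>0$, a free HARQ process, not scheduled for HARQ retransmission in slot $n$) $C_u[n]\ge 0$. *)

theory Defs
  imports Complex_Main
begin

datatype cbs_variant = CBS_DT | CBS_PU

definition cbs_f :: "real \<Rightarrow> real \<Rightarrow> nat \<Rightarrow> real" where
  "cbs_f C dC Q =
     (if C < 0 then min (C + dC) 0
      else if C > 0 \<and> Q = 0 then 0
      else C + dC)"

text \<open>Debit D[n]; the grant indicator G[n] in {0,1} is rendered as a boolean.\<close>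
definition cbs_debit :: "cbs_variant \<Rightarrow> bool \<Rightarrow> real \<Rightarrow> nat \<Rightarrow> real" where
  "cbs_debit v G TBS Q =
     (if \<not> G then 0
      else (case v of CBS_DT \<Rightarrow> TBS | CBS_PU \<Rightarrow> min TBS (real Q)))"

primrec cbs_credit ::
  "cbs_variant \<Rightarrow> real \<Rightarrow> real \<Rightarrow> real \<Rightarrow> (nat \<Rightarrow> nat) \<Rightarrow> (nat \<Rightarrow> bool)
   \<Rightarrow> (nat \<Rightarrow> real) \<Rightarrow> real \<Rightarrow> nat \<Rightarrow> real" where
  "cbs_credit v lo hi dC Q G TBS C0 0 = C0"
| "cbs_credit v lo hi dC Q G TBS C0 (Suc n) =
     min (max (cbs_f (cbs_credit v lo hi dC Q G TBS C0 n) dC (Q n)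
               - cbs_debit v (G n) (TBS n) (Q n)) lo) hi"

end

theory Submission
  imports Defs
begin

lemma credit_bounds:
  assumes "lo \<le> hi" "lo \<le> C0" "C0 \<le> hi"
  shows "lo \<le> cbs_credit v lo hi dC Q G TBS C0 n \<and> cbs_credit v lo hi dC Q G TBS C0 n \<le> hi"
  using assms by (cases n) auto

lemma step_neg:
  assumes dC: "dC > 0" and lo: "lo < 0" "0 < hi"
    and x: "x < 0" "lo \<le> x" and ng: "\<not> g"
  shows "min (max (cbs_f x dC q - cbs_debit v g t q) lo) hi = min (x + dC) 0"
  using assms by (simp add: cbs_f_def cbs_debit_def)

lemma credit_recover:
  assumes dC: "dC > 0" and lo: "lo < 0" "0 < hi"
    and ck: "cbs_credit v lo hi dC Q G TBS C0 k = c" and c: "lo \<le> c" "c < 0"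
    and ng: "\<forall>n\<ge>k. \<not> G n"
  shows "real m \<le> of_int \<lceil>- c / dC\<rceil> \<Longrightarrow> cbs_credit v lo hi dC Q G TBS C0 (k + m) = min (c + real m * dC) 0"
proof (induction m)
  case 0
  then show ?case using ck c by simp
next
  case (Suc m)
  have "real m + 1 \<le> of_int \<lceil>- c / dC\<rceil>" using Suc.prems by simp
  hence "real m + 1 < - c / dC + 1" using of_int_ceiling_le_add_one[of "- c / dC"]
    by (smt (verit) ceiling_correct)
  hence "real m < - c / dC" by simp
  hence lt: "c + real m * dC < 0" using dC by (simp add: field_simps)
  have IH: "cbs_credit v lo hi dC Q G TBS C0 (k + m) = c + real m * dC"
    using Suc.IH Suc.prems lt by simp
  have "0 \<le> real m * dC" using dC by simp
  hence ge: "lo \<le> c + real m * dC" using c by linarith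
  have "cbs_credit v lo hi dC Q G TBS C0 (k + Suc m) = min (c + real m * dC + dC) 0"
    using step_neg[OF dC lo lt ge, of "G (k+m)"] ng IH by simp
  thus ?case by (simp add: algebra_simps)
qed

lemma least_rec:
  assumes dC: "dC > 0" and lo: "lo < 0" "0 < hi"
    and ck: "cbs_credit v lo hi dC Q G TBS C0 k = c" and c: "lo \<le> c" "c < 0"
    and ng: "\<forall>n\<ge>k. \<not> G n"
  shows "real (LEAST m. 0 \<le> cbs_credit v lo hi dC Q G TBS C0 (k + m)) = of_int \<lceil>- c / dC\<rceil>"
    and "\<exists>m. 0 \<le> cbs_credit v lo hi dC Q G TBS C0 (k + m)"
proof -
  define M where "M = nat \<lceil>- c / dC\<rceil>"
  have pos: "0 < - c / dC" using c dC by (simp add: divide_neg_pos)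
  hence RM: "real M = of_int \<lceil>- c / dC\<rceil>" unfolding M_def by simp
  have eqM: "cbs_credit v lo hi dC Q G TBS C0 (k + M) = min (c + real M * dC) 0"
    using credit_recover[OF dC lo ck c ng] RM by simp
  have "- c / dC \<le> real M" using RM by simp
  hence "0 \<le> c + real M * dC" using dC by (simp add: field_simps)
  hence atM: "0 \<le> cbs_credit v lo hi dC Q G TBS C0 (k + M)" using eqM by simp
  have below: "\<not> 0 \<le> cbs_credit v lo hi dC Q G TBS C0 (k + m)" if "m < M" for m
  proof -
    have "real m < real M" using that by simp
    hence "int m < \<lceil>- c / dC\<rceil>" using RM by linarith
    hence "real m < - c / dC" by (metis less_ceiling_iff of_int_of_nat_eq)
    hence lt: "c + real m * dC < 0" using dC by (simp add: field_simps)
    have "cbs_credit v lo hi dC Q G TBS C0 (k + m) = min (c + real m * dC) 0"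
      using credit_recover[OF dC lo ck c ng] RM \<open>real m < real M\<close> by simp
    thus ?thesis using lt by simp
  qed
  have "(LEAST m. 0 \<le> cbs_credit v lo hi dC Q G TBS C0 (k + m)) = M"
    by (rule Least_equality) (use atM below in \<open>auto simp: not_less[symmetric]\<close>)
  thus "real (LEAST m. 0 \<le> cbs_credit v lo hi dC Q G TBS C0 (k + m)) = of_int \<lceil>- c / dC\<rceil>"
    using RM by simp
  show "\<exists>m. 0 \<le> cbs_credit v lo hi dC Q G TBS C0 (k + m)" using atM by blast
qed

theorem mainTheorem1:
  fixes v :: cbs_variant
    and Tslot :: real
    and p :: "'u::finite \<Rightarrow> 'p"
    and idleSlope :: "'p \<Rightarrow> real"
    and lo hi C0 :: "'u \<Rightarrow> real"
    and Q :: "'u \<Rightarrow> nat \<Rightarrow> nat"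
    and G :: "'u \<Rightarrow> nat \<Rightarrow> bool"
    and TBS :: "'u \<Rightarrow> nat \<Rightarrow> real"
  defines "dC \<equiv> \<lambda>u. idleSlope (p u) * Tslot"
    and "C \<equiv> \<lambda>u. cbs_credit v (lo u) (hi u) (idleSlope (p u) * Tslot) (Q u) (G u) (TBS u) (C0 u)"
  assumes Tslot_pos: "Tslot > 0"
    and dC_pos: "\<forall>u. dC u > 0"
    and bounds: "\<forall>u. lo u < 0 \<and> 0 < hi u"
    and init: "\<forall>u. lo u \<le> C0 u \<and> C0 u \<le> hi u"
    and TBS_nonneg: "\<forall>u n. TBS u n \<ge> 0"
    and eligible: "\<forall>u n. G u n \<longrightarrow> Q u n > 0 \<and> C u n \<ge> 0"
  shows "(\<forall>u n. lo u \<le> C u n \<and> C u n \<le> hi u)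
       \<and> (\<forall>u k. C u k < 0 \<and> (\<forall>n\<ge>k. \<not> G u n) \<longrightarrow> (\<exists>m. 0 \<le> C u (k + m)))
       \<and> (\<forall>u k. C u k < 0 \<and> (\<forall>n\<ge>k. \<not> G u n) \<longrightarrow>
              real (LEAST m. 0 \<le> C u (k + m)) * Tslot \<le> of_int \<lceil>- lo u / dC u\<rceil> * Tslot)
       \<and> (\<forall>u k. C u k = lo u \<and> (\<forall>n\<ge>k. \<not> G u n) \<longrightarrow>
              real (LEAST m. 0 \<le> C u (k + m)) * Tslot = of_int \<lceil>- lo u / dC u\<rceil> * Tslot)"
proof -
  have B: "lo u \<le> C u n \<and> C u n \<le> hi u" for u n
    unfolding C_def using credit_bounds[of "lo u" "hi u" "C0 u"] bounds init
    by (metis less_trans order_less_imp_le)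
  have dCu: "idleSlope (p u) * Tslot > 0" for u using dC_pos dC_def by simp
  have L: "real (LEAST m. 0 \<le> C u (k + m)) = of_int \<lceil>- C u k / dC u\<rceil>
       \<and> (\<exists>m. 0 \<le> C u (k + m))" if "C u k < 0" "\<forall>n\<ge>k. \<not> G u n" for u k
  proof -
    have lo': "lo u < 0" "0 < hi u" using bounds by auto
    have ck: "cbs_credit v (lo u) (hi u) (idleSlope (p u) * Tslot) (Q u) (G u) (TBS u) (C0 u) k = C u k"
      unfolding C_def by simp
    note R = least_rec[OF dCu lo' ck conjunct1[OF B[of u k]] that]
    show ?thesis using R unfolding C_def dC_def by simp
  qed
  have M: "real (LEAST m. 0 \<le> C u (k + m)) * Tslot \<le> of_int \<lceil>- lo u / dC u\<rceil> * Tslot"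
    if "C u k < 0" "\<forall>n\<ge>k. \<not> G u n" for u k
  proof -
    have "- C u k / dC u \<le> - lo u / dC u" using B[of u k] dC_pos[rule_format, of u]
      by (simp add: divide_right_mono del: divide_minus_left)
    hence "\<lceil>- C u k / dC u\<rceil> \<le> \<lceil>- lo u / dC u\<rceil>" by (rule ceiling_mono)
    hence "real (LEAST m. 0 \<le> C u (k + m)) \<le> of_int \<lceil>- lo u / dC u\<rceil>"
      using L[OF that] by simp
    thus ?thesis using Tslot_pos by simp
  qed
  show ?thesis
    using B L M bounds by auto
qed

end
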